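(* Let $g_1:\mathbb{R}^d\to[0,\infty)$ be differentiable almost everywhere, let $U$ be a $d\times d$ orthogonal matrix, and define $g_2(\bm z)=g_1(U\bm z)$. Assume that for each of $g_1,g_2$ the optimal drift equation $\nabla g(\bm z)/g(\bm z)=\bm z$ has a unique solution. Let $g_1^{\mathrm I},g_2^{\mathrm I}$ be the integrands obtained by applying optimal drift importance sampling to $g_1,g_2$. Then there is an orthogonal matrix $V$ with $g_2^{\mathrm I}(\bm z)=g_1^{\mathrm I}(V\bm z)$ for all $\bm z$; consequently $g_1$ and $g_2$ have the same IS-active subspaces, and their analytic expressions in the $d$-dimensional IS-active subspace coincide: $g_1^{\mathrm{IA}}(\bm z)=g_2^{\mathrm{IA}}(\bm z)$.
   Context: Optimal drift importance sampling: for a nonnegative $g$, the optimal drift $\bm\mu^*$ is the (assumed unique) solution of $\nabla g(\bm z)/g(\bm z)=\bm z$, and the IS integrand is $g^{\mathrm I}(\bm z)=g(\bm z+\bm\mu^* )\exp\!\big(-{\bm\mu^*}^T\bm z-\tfrac12{\bm\mu^*}^T\bm\mu^*\big)$, so that $\mathbb{E}g(\bm Z)=\mathbb{E}g^{\mathrm I}(\bm Z)$ for $\bm Z\sim N(\bm 0,I_d)$. For an a.e. differentiable $h$, the gradient information matrix is $C=\mathbb{E}\big(\nabla h(\bm Z)\nabla h(\bm Z)^T\big)=Q\Lambda Q^T$ (eigendecomposition, $Q$ orthogonal, eigenvalues descending); the $r$-dimensional active subspace of $h$ is spanned by the first $r$ columns of $Q$. The IS-active subspaces of $g$ are the active subspaces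 of $g^{\mathrm I}$, and $g^{\mathrm{IA}}(\bm z):=g^{\mathrm I}(Q\bm z)$ with $Q$ the eigenvector matrix of the gradient information matrix of $g^{\mathrm I}$. Two functions related by $h_2(\bm z)=h_1(V\bm z)$, $V$ orthogonal, are said to have the same active subspaces when, identifying their coordinates as coordinates of the same vector in orthonormal bases related by $V$, the $r$-dimensional active subspaces coincide for every $r$, with eigenvector matrices chosen correspondingly ($Q_2=V^TQ_1$) in case of repeated eigenvalues. It is assumed the relevant gradient information matrices are finite. *)

theory Defs
  imports "HOL-Analysis.Analysis"
begin

text \<open>Vectors in R^d are elements of real^'n, where the index type 'n is finite and
  well-ordered (the order fixes "first r columns" and "descending eigenvalues").\<close>

definition grad :: "(real^'n::finite \<Rightarrow> real) \<Rightarrow> real^'n \<Rightarrow> real^'n" where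
  "grad h z = (\<chi> i. frechet_derivative h (at z) (axis i 1))"

definition std_gauss :: "(real^'n::finite) measure" where
  "std_gauss = density lborel
     (\<lambda>z. ennreal ((2 * pi) powr (- real CARD('n) / 2) * exp (- (norm z)\<^sup>2 / 2)))"

definition opt_drift_eq :: "(real^'n::finite \<Rightarrow> real) \<Rightarrow> real^'n \<Rightarrow> bool" where
  "opt_drift_eq g z \<longleftrightarrow> g differentiable (at z) \<and> g z \<noteq> 0 \<and> (1 / g z) *\<^sub>R grad g z = z"

definition mu_star :: "(real^'n::finite \<Rightarrow> real) \<Rightarrow> real^'n" where
  "mu_star g = (THE z. opt_drift_eq g z)"

definition gI :: "(real^'n::finite \<Rightarrow> real) \<Rightarrow> real^'n \<Rightarrow> real" where
  "gI g z = g (z + mu_star g) * exp (- (mu_star g \<bullet> z) - (1/2) * (mu_star g \<bullet> mu_star g))"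

definition grad_info :: "(real^'n::finite \<Rightarrow> real) \<Rightarrow> real^'n^'n" where
  "grad_info h = (\<chi> i j. \<integral> z. grad h z $ i * grad h z $ j \<partial>std_gauss)"

definition eig_decomp :: "real^'n::{finite,wellorder}^'n::{finite,wellorder} \<Rightarrow> real^'n::{finite,wellorder}^'n::{finite,wellorder} \<Rightarrow> real^'n::{finite,wellorder}^'n::{finite,wellorder} \<Rightarrow> bool" where
  "eig_decomp C Q Lam \<longleftrightarrow> orthogonal_matrix Q
     \<and> (\<forall>i j. i \<noteq> j \<longrightarrow> Lam $ i $ j = 0)
     \<and> (\<forall>i j. i \<le> j \<longrightarrow> Lam $ j $ j \<le> Lam $ i $ i)
     \<and> C = Q ** Lam ** transpose Q"

text \<open>r-dimensional active subspace: span of the first r columns of Q.\<close>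
definition active_subspace :: "real^'n::{finite,wellorder}^'n::{finite,wellorder} \<Rightarrow> nat \<Rightarrow> (real^'n::{finite,wellorder}) set" where
  "active_subspace Q r = span {column i Q | i. card {k. k < i} < r}"

definition gIA :: "(real^'n::finite \<Rightarrow> real) \<Rightarrow> real^'n^'n \<Rightarrow> real^'n \<Rightarrow> real" where
  "gIA g Q z = gI g (Q *v z)"

end

theory Submission
  imports Defs
begin

lemma grad_nondiff:
  assumes "\<not> h differentiable (at z)"
  shows "grad h z = (\<chi> i. (SOME f'::real^'n \<Rightarrow> real. False) (axis i 1))"
proof -
  have "(\<lambda>f'. (h has_derivative f') (at z)) = (\<lambda>f'. False)"
    using assms unfolding differentiable_def by auto
  then show ?thesis unfolding grad_def frechet_derivative_def by simp
qed

lemma linear_real_expand: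
  fixes f :: "real^'n \<Rightarrow> real"
  assumes "linear f"
  shows "f v = (\<Sum>i\<in>UNIV. v$i * f (axis i 1))"
proof -
  have "f v = f (\<Sum>i\<in>UNIV. v $ i *s axis i 1)" by (simp add: basis_expansion)
  also have "\<dots> = (\<Sum>i\<in>UNIV. f (v $ i *s axis i 1))" by (simp add: linear_sum[OF assms])
  also have "\<dots> = (\<Sum>i\<in>UNIV. v$i * f (axis i 1))"
    using linear_scale[OF assms] by (simp add: scalar_mult_eq_scaleR)
  finally show ?thesis .
qed

lemma grad_deriv:
  fixes h :: "real^'n \<Rightarrow> real"
  assumes "h differentiable (at z)"
  shows "(h has_derivative (\<lambda>v. grad h z \<bullet> v)) (at z)"
proof -
  let ?f = "frechet_derivative h (at z)"
  have d: "(h has_derivative ?f) (at z)" using assms frechet_derivative_works by blast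
  have l: "linear ?f" using has_derivative_linear[OF d] .
  have "?f = (\<lambda>v. grad h z \<bullet> v)"
  proof
    fix v show "?f v = grad h z \<bullet> v"
      unfolding linear_real_expand[OF l, of v] grad_def inner_vec_def by (simp add: mult.commute)
  qed
  with d show ?thesis by simp
qed

lemma grad_unique:
  fixes h :: "real^'n \<Rightarrow> real"
  assumes "(h has_derivative (\<lambda>v. a \<bullet> v)) (at z)"
  shows "grad h z = a"
proof -
  have "(\<lambda>v. a \<bullet> v) = frechet_derivative h (at z)" using frechet_derivative_at[OF assms] .
  then show ?thesis unfolding grad_def by (auto simp: vec_eq_iff inner_axis simp flip: \<open>(\<lambda>v. a \<bullet> v) = frechet_derivative h (at z)\<close>)
qed

definition Sset :: "(real^'n \<Rightarrow> real) \<Rightarrow> real \<Rightarrow> real \<Rightarrow> real^'n \<Rightarrow> (real^'n) set" where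
  "Sset h e d a = {z. \<forall>y y'. dist y z < d \<and> dist y' z < d \<longrightarrow>
      \<bar>h y - h y' - a \<bullet> (y - y')\<bar> \<le> e * (dist y z + dist y' z)}"

lemma closed_Sset: "closed (Sset (h::real^'n \<Rightarrow> real) e d a)"
  unfolding Sset_def
proof (intro closed_Collect_all closed_Collect_imp)
  fix y y' :: "real^'n"
  show "open {z. dist y z < d \<and> dist y' z < d}"
    by (intro open_Collect_conj open_Collect_less continuous_intros)
  show "closed {z. \<bar>h y - h y' - a \<bullet> (y - y')\<bar> \<le> e * (dist y z + dist y' z)}"
    by (intro closed_Collect_le continuous_intros)
qed

lemma key_fwd:
  fixes h :: "real^'n \<Rightarrow> real"
  assumes dense: "\<And>X. open X \<Longrightarrow> X \<noteq> {} \<Longrightarrow> \<exists>d\<in>Q. d\<in>X"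
    and dz: "h differentiable (at z)" and le: "grad h z $ i \<le> b"
  shows "\<exists>m::nat. \<exists>a\<in>Q. a$i \<le> b + 1/Suc n \<and> z \<in> Sset h (1/Suc n) (1/Suc m) a"
proof -
  define e where "e = 1 / real (Suc n)"
  define G where "G = grad h z"
  have e0: "e > 0" unfolding e_def by simp
  have der: "(h has_derivative (\<lambda>v. G \<bullet> v)) (at z)" unfolding G_def using grad_deriv[OF dz] .
  then obtain d where d0: "d > 0" and
    dd: "\<And>y. norm (y - z) < d \<Longrightarrow> norm (h y - h z - G \<bullet> (y - z)) \<le> e/2 * norm (y - z)"
    unfolding has_derivative_at_alt using e0 by (metis half_gt_zero)
  obtain m :: nat where m: "1 / real (Suc m) < d"
    using d0 by (metis nat_approx_posE)
  obtain a where aQ: "a \<in> Q" and aG: "a \<in> ball G (e/2)"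
    using dense[of "ball G (e/2)"] e0 by auto
  have naG: "norm (G - a) < e/2" using aG by (simp add: dist_norm)
  have ai: "a$i \<le> b + e"
  proof -
    have "\<bar>(G - a)$i\<bar> \<le> norm (G - a)" by (rule component_le_norm_cart)
    then show ?thesis using naG le unfolding G_def by simp
  qed
  have "z \<in> Sset h e (1/Suc m) a"
    unfolding Sset_def
  proof (intro CollectI allI impI)
    fix y y' :: "real^'n"
    assume yy: "dist y z < 1/Suc m \<and> dist y' z < 1/Suc m"
    then have n1: "norm (y - z) < d" "norm (y' - z) < d" using m by (auto simp: dist_norm)
    have A: "\<bar>h y - h z - G \<bullet> (y - z)\<bar> \<le> e/2 * norm (y - z)" using dd[OF n1(1)] by simp
    have B: "\<bar>h y' - h z - G \<bullet> (y' - z)\<bar> \<le> e/2 * norm (y' - z)" using dd[OF n1(2)] by simp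
    have C: "\<bar>(G - a) \<bullet> (y - y')\<bar> \<le> e/2 * (norm (y - z) + norm (y' - z))"
    proof -
      have "\<bar>(G - a) \<bullet> (y - y')\<bar> \<le> norm (G - a) * norm (y - y')" by (rule Cauchy_Schwarz_ineq2)
      also have "\<dots> \<le> e/2 * norm (y - y')" using naG by (intro mult_right_mono) auto
      also have "norm (y - y') \<le> norm (y - z) + norm (y' - z)"
        using norm_triangle_ineq4[of "y - z" "y' - z"] by simp
      then have "e/2 * norm (y - y') \<le> e/2 * (norm (y - z) + norm (y' - z))"
        using e0 by (intro mult_left_mono) auto
      finally show ?thesis .
    qed
    have eq: "h y - h y' - a \<bullet> (y - y') = (h y - h z - G \<bullet> (y - z)) - (h y' - h z - G \<bullet> (y' - z)) + (G - a) \<bullet> (y - y')"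
      by (simp add: inner_diff_left inner_diff_right algebra_simps)
    have "\<bar>h y - h y' - a \<bullet> (y - y')\<bar> \<le> e/2 * norm (y - z) + e/2 * norm (y' - z) + e/2 * (norm (y - z) + norm (y' - z))"
      unfolding eq using A B C by linarith
    then show "\<bar>h y - h y' - a \<bullet> (y - y')\<bar> \<le> e * (dist y z + dist y' z)"
      by (simp add: dist_norm algebra_simps)
  qed
  then show ?thesis using aQ ai unfolding e_def by blast
qed

lemma key_bwd:
  fixes h :: "real^'n \<Rightarrow> real"
  assumes H: "\<forall>n::nat. \<exists>m::nat. \<exists>a\<in>Q. a$i \<le> b + 1/Suc n \<and> z \<in> Sset h (1/Suc n) (1/Suc m) a"
  shows "h differentiable (at z) \<and> grad h z $ i \<le> b"
proof -
  define e :: "nat \<Rightarrow> real" where "e n = 1 / real (Suc n)" for n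
  obtain M A where MA: "\<And>n. A n $ i \<le> b + e n \<and> z \<in> Sset h (e n) (1/Suc (M n)) (A n)"
    using H unfolding e_def by metis
  define \<delta> :: "nat \<Rightarrow> real" where "\<delta> n = 1 / real (Suc (M n))" for n
  have e0: "e n > 0" for n unfolding e_def by simp
  have d0: "\<delta> n > 0" for n unfolding \<delta>_def by simp
  have P: "\<bar>h y - h z - A n \<bullet> (y - z)\<bar> \<le> e n * norm (y - z)" if "norm (y - z) < \<delta> n" for n y
  proof -
    have "\<forall>y y'. dist y z < \<delta> n \<and> dist y' z < \<delta> n \<longrightarrow>
      \<bar>h y - h y' - A n \<bullet> (y - y')\<bar> \<le> e n * (dist y z + dist y' z)"
      using MA[of n] unfolding Sset_def \<delta>_def by blast
    from spec[OF spec[OF this, of y], of z] that d0[of n] show ?thesis by (simp add: dist_norm)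
  qed
  have AA: "norm (A n - A k) \<le> e n + e k" for n k
  proof (cases "A n - A k = 0")
    case True then show ?thesis using e0[of n] e0[of k] by simp
  next
    case False
    define w where "w = A n - A k"
    define t where "t = min (\<delta> n) (\<delta> k) / 2"
    have t0: "t > 0" unfolding t_def using d0[of n] d0[of k] by simp
    have nw: "norm w > 0" using False unfolding w_def by simp
    define y where "y = z + (t / norm w) *\<^sub>R w"
    have ny: "norm (y - z) = t" unfolding y_def using t0 nw by simp
    have lt: "norm (y - z) < \<delta> n" "norm (y - z) < \<delta> k" unfolding ny t_def using d0[of n] d0[of k] by auto
    have "w \<bullet> (y - z) = t * norm w"
      unfolding y_def using nw by (simp add: power2_norm_eq_inner[symmetric] power2_eq_square)
    moreover have "w \<bullet> (y - z) = (h y - h z - A k \<bullet> (y - z)) - (h y - h z - A n \<bullet> (y - z))"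
      unfolding w_def by (simp add: inner_diff_left)
    ultimately have "t * norm w \<le> e k * t + e n * t"
      using P[OF lt(1)] P[OF lt(2)] unfolding ny by linarith
    then have "t * norm w \<le> t * (e n + e k)" by (simp add: algebra_simps)
    then show ?thesis using t0 unfolding w_def by simp
  qed
  have elim: "e \<longlonglongrightarrow> 0" unfolding e_def using LIMSEQ_inverse_real_of_nat by (simp add: inverse_eq_divide)
  have "Cauchy A"
  proof (rule metric_CauchyI)
    fix r :: real assume r: "r > 0"
    obtain N :: nat where N: "1 / real (Suc N) < r/2" using r by (metis half_gt_zero nat_approx_posE)
    have "e n \<le> 1 / real (Suc N)" if "n \<ge> N" for n
      unfolding e_def using that by (simp add: frac_le)
    then have "\<forall>m\<ge>N. \<forall>n\<ge>N. dist (A m) (A n) < r"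
    proof (intro allI impI)
      fix m n assume "m \<ge> N" "n \<ge> N"
      then show "dist (A m) (A n) < r"
        using AA[of m n] \<open>\<And>n. n \<ge> N \<Longrightarrow> e n \<le> 1 / real (Suc N)\<close>[of m]
          \<open>\<And>n. n \<ge> N \<Longrightarrow> e n \<le> 1 / real (Suc N)\<close>[of n] N
        by (simp add: dist_norm)
    qed
    then show "\<exists>N. \<forall>m\<ge>N. \<forall>n\<ge>N. dist (A m) (A n) < r" by blast
  qed
  then obtain G where AG: "A \<longlonglongrightarrow> G" using Cauchy_convergent_iff convergent_def by blast
  have bnd: "norm (A n - G) \<le> e n" for n
  proof -
    have "(\<lambda>k. norm (A n - A k)) \<longlonglongrightarrow> norm (A n - G)"
      by (intro tendsto_intros AG)
    moreover have "(\<lambda>k. e n + e k) \<longlonglongrightarrow> e n + 0" by (intro tendsto_intros elim)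
    ultimately show ?thesis using AA by (intro LIMSEQ_le[of "\<lambda>k. norm (A n - A k)" _ "\<lambda>k. e n + e k"]) auto
  qed
  have der: "(h has_derivative (\<lambda>v. G \<bullet> v)) (at z)"
    unfolding has_derivative_at_alt
  proof (intro conjI allI impI)
    show "bounded_linear ((\<bullet>) G)" by (rule bounded_linear_inner_right)
    fix r :: real assume r: "r > 0"
    obtain n :: nat where n: "1 / real (Suc n) < r/2" using r by (metis half_gt_zero nat_approx_posE)
    have "\<forall>y. norm (y - z) < \<delta> n \<longrightarrow> norm (h y - h z - G \<bullet> (y - z)) \<le> r * norm (y - z)"
    proof (intro allI impI)
      fix y assume y: "norm (y - z) < \<delta> n"
      have "\<bar>(A n - G) \<bullet> (y - z)\<bar> \<le> norm (A n - G) * norm (y - z)" by (rule Cauchy_Schwarz_ineq2)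
      also have "\<dots> \<le> e n * norm (y - z)" using bnd[of n] by (intro mult_right_mono) auto
      finally have 1: "\<bar>(A n - G) \<bullet> (y - z)\<bar> \<le> e n * norm (y - z)" .
      have 2: "h y - h z - G \<bullet> (y - z) = (h y - h z - A n \<bullet> (y - z)) + (A n - G) \<bullet> (y - z)"
        by (simp add: inner_diff_left)
      have "\<bar>h y - h z - G \<bullet> (y - z)\<bar> \<le> 2 * e n * norm (y - z)"
        unfolding 2 using 1 P[OF y] by linarith
      also have "\<dots> \<le> r * norm (y - z)" using n unfolding e_def by (intro mult_right_mono) auto
      finally show "norm (h y - h z - G \<bullet> (y - z)) \<le> r * norm (y - z)" by simp
    qed
    then show "\<exists>d>0. \<forall>y. norm (y - z) < d \<longrightarrow> norm (h y - h z - G \<bullet> (y - z)) \<le> r * norm (y - z)"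
      using d0 by blast
  qed
  have gG: "grad h z = G" by (rule grad_unique[OF der])
  have "G $ i \<le> b"
  proof -
    have "(\<lambda>n. A n $ i) \<longlonglongrightarrow> G $ i" by (intro tendsto_vec_nth AG)
    moreover have "(\<lambda>n. b + e n) \<longlonglongrightarrow> b + 0" by (intro tendsto_intros elim)
    ultimately show ?thesis using MA by (intro LIMSEQ_le[of "\<lambda>n. A n $ i" _ "\<lambda>n. b + e n"]) auto
  qed
  then show ?thesis using der gG differentiableI by auto
qed

lemma grad_borel:
  fixes h :: "real^'n \<Rightarrow> real"
  shows "(\<lambda>z. grad h z $ i) \<in> borel_measurable borel"
proof -
  obtain Q :: "(real^'n) set" where cQ: "countable Q" and dQ: "\<And>X. open X \<Longrightarrow> X \<noteq> {} \<Longrightarrow> \<exists>d\<in>Q. d\<in>X"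
    using countable_dense_setE by blast
  define T where "T b = (\<Inter>n::nat. \<Union>m::nat. \<Union>a\<in>{a\<in>Q. a$i \<le> b + 1/Suc n}. Sset h (1/Suc n) (1/Suc m) a)" for b
  have TB: "T b \<in> sets borel" for b
    unfolding T_def
  proof (intro sets.countable_INT' sets.countable_UN' image_subsetI)
    fix n m :: nat and a assume "a \<in> {a\<in>Q. a$i \<le> b + 1/Suc n}"
    show "Sset h (1/Suc n) (1/Suc m) a \<in> sets borel" by (intro borel_closed closed_Sset)
  qed (use cQ in auto)
  have Tiff: "z \<in> T b \<longleftrightarrow> (h differentiable (at z) \<and> grad h z $ i \<le> b)" for z b
  proof
    assume "z \<in> T b"
    then have "\<forall>n::nat. \<exists>m::nat. \<exists>a\<in>Q. a$i \<le> b + 1/Suc n \<and> z \<in> Sset h (1/Suc n) (1/Suc m) a"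
      unfolding T_def by blast
    then show "h differentiable (at z) \<and> grad h z $ i \<le> b" by (rule key_bwd)
  next
    assume "h differentiable (at z) \<and> grad h z $ i \<le> b"
    then have "\<exists>m::nat. \<exists>a\<in>Q. a$i \<le> b + 1/Suc n \<and> z \<in> Sset h (1/Suc n) (1/Suc m) a" for n
      using key_fwd[OF dQ] by blast
    then show "z \<in> T b" unfolding T_def by blast
  qed
  define D where "D = (\<Union>k::nat. T (real k))"
  have DB: "D \<in> sets borel" unfolding D_def using TB by auto
  have Diff: "z \<in> D \<longleftrightarrow> h differentiable (at z)" for z
  proof
    assume "h differentiable (at z)"
    moreover obtain k :: nat where "grad h z $ i \<le> real k" using real_arch_simple by blast
    ultimately show "z \<in> D" unfolding D_def using Tiff by blast
  qed (auto simp: D_def Tiff)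
  define c where "c = (\<chi> i. (SOME f'::real^'n \<Rightarrow> real. False) (axis i 1))"
  have "{z. grad h z $ i \<le> b} = T b \<union> (if c$i \<le> b then UNIV - D else {})" for b
    using Tiff Diff grad_nondiff[of h] unfolding c_def by (auto, metis vec_lambda_beta)
  then show ?thesis
    unfolding borel_measurable_iff_le using TB DB by auto
qed

declare vector_transpose_matrix[simp del] transpose_matrix_vector[simp del]

lemma orth_trans: "orthogonal_matrix (U::real^'n^'n) \<Longrightarrow> orthogonal_transformation (\<lambda>z. U *v z)"
  by (simp add: orthogonal_transformation_matrix matrix_vector_mul_linear)

lemma orth_norm: "orthogonal_matrix (U::real^'n^'n) \<Longrightarrow> norm (U *v z) = norm z"
  using orth_trans orthogonal_transformation_norm by blast

lemma orth_inv1: "orthogonal_matrix (U::real^'n^'n) \<Longrightarrow> U *v (transpose U *v z) = z"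
  by (metis matrix_vector_mul_assoc matrix_vector_mul_lid orthogonal_matrix_def)

lemma orth_inv2: "orthogonal_matrix (U::real^'n^'n) \<Longrightarrow> transpose U *v (U *v z) = z"
  by (simp add: matrix_vector_mul_assoc orthogonal_matrix_def)

lemma mv_meas: "(\<lambda>z. (U::real^'n^'n) *v z) \<in> borel \<rightarrow>\<^sub>M borel"
  by (intro borel_measurable_continuous_onI continuous_intros)

lemma em_lb: "S \<in> sets borel \<Longrightarrow> emeasure lebesgue S = emeasure lborel S"
  by (simp add: main_part_sets)

lemma lborel_orth:
  fixes U :: "real^'n::{finite,wellorder}^'n::{finite,wellorder}"
  assumes U: "orthogonal_matrix U"
  shows "distr lborel borel (\<lambda>z. U *v z) = lborel"
proof (rule lborel_eqI[symmetric])
  fix l u :: "real^'n::{finite,wellorder}" assume le: "\<And>b. b \<in> Basis \<Longrightarrow> l \<bullet> b \<le> u \<bullet> b"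
  have pre: "(\<lambda>z. U *v z) -` box l u = (\<lambda>z. transpose U *v z) ` box l u"
    using orth_inv1[OF U] orth_inv2[OF U] by (auto simp: image_iff) (metis)
  have ot: "orthogonal_transformation (\<lambda>z. transpose U *v z)"
    using orth_trans[of "transpose U"] U by (simp add: orthogonal_matrix_transpose)
  have opn: "open ((\<lambda>z. transpose U *v z) ` box l u)"
    using ot by (metis open_box orthogonal_transformation_surj orthogonal_transformation_linear
        orthogonal_transformation_inj open_surjective_linear_image)
  have lm: "box l u \<in> lmeasurable" by simp
  have "emeasure (distr lborel borel (\<lambda>z. U *v z)) (box l u) = emeasure lborel ((\<lambda>z. transpose U *v z) ` box l u)"
    by (subst emeasure_distr) (auto simp: mv_meas pre)
  also have "\<dots> = emeasure lebesgue ((\<lambda>z. transpose U *v z) ` box l u)"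
    using opn by (simp add: em_lb borel_open)
  also have "\<dots> = ennreal (measure lebesgue ((\<lambda>z. transpose U *v z) ` box l u))"
    using measurable_orthogonal_image[OF ot lm] unfolding fmeasurable_def
    by (intro emeasure_eq_ennreal_measure) (auto simp: top.not_eq_extremum)
  also have "\<dots> = ennreal (measure lebesgue (box l u))"
    using measure_orthogonal_image[OF ot lm] by simp
  also have "\<dots> = emeasure lebesgue (box l u)"
    using lm by (simp add: fmeasurable_def emeasure_eq_ennreal_measure)
  also have "\<dots> = emeasure lborel (box l u)" by (simp add: em_lb)
  also have "\<dots> = (\<Prod>b\<in>Basis. (u - l) \<bullet> b)" using le by (simp add: emeasure_lborel_box_eq)
  finally show "emeasure (distr lborel borel (\<lambda>z. U *v z)) (box l u) = (\<Prod>b\<in>Basis. (u - l) \<bullet> b)" .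
qed simp

lemma gauss_orth:
  fixes U :: "real^'n::{finite,wellorder}^'n::{finite,wellorder}"
  assumes U: "orthogonal_matrix U"
  shows "distr std_gauss borel (\<lambda>z. U *v z) = std_gauss"
proof -
  define \<phi> :: "real^'n::{finite,wellorder} \<Rightarrow> ennreal" where
    "\<phi> z = ennreal ((2 * pi) powr (- real CARD('n) / 2) * exp (- (norm z)\<^sup>2 / 2))" for z
  have Ut: "orthogonal_matrix (transpose U)" using U by (simp add: orthogonal_matrix_transpose)
  have comp: "\<phi> \<circ> (\<lambda>z. transpose U *v z) = \<phi>"
    by (rule ext) (simp only: \<phi>_def o_def orth_norm[OF Ut])
  have "distr (density (distr lborel borel (\<lambda>z. transpose U *v z)) \<phi>) lborel (\<lambda>z. U *v z)
      = density lborel (\<phi> \<circ> (\<lambda>z. transpose U *v z))"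
  proof (rule distr_density_distr)
    show "\<phi> \<in> borel_measurable borel" unfolding \<phi>_def by measurable
  qed (auto simp: mv_meas orth_inv1[OF U])
  then have "distr (density lborel \<phi>) lborel (\<lambda>z. U *v z) = density lborel \<phi>"
    unfolding lborel_orth[OF Ut] comp .
  moreover have "distr (density lborel \<phi>) lborel (\<lambda>z. U *v z) = distr (density lborel \<phi>) borel (\<lambda>z. U *v z)"
    by (rule distr_cong) auto
  ultimately show ?thesis unfolding std_gauss_def \<phi>_def by simp
qed

lemma mv_has_derivative: "((\<lambda>x. (U::real^'n^'m) *v x) has_derivative (\<lambda>x. U *v x)) (at z)"
  by (intro bounded_linear_imp_has_derivative matrix_vector_mul_bounded_linear)

lemma chain_grad:
  fixes h :: "real^'n \<Rightarrow> real" and U :: "real^'n^'n"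
  assumes d: "h differentiable (at (U *v z))"
  shows "(\<lambda>x. h (U *v x)) differentiable (at z)"
    and "grad (\<lambda>x. h (U *v x)) z = transpose U *v grad h (U *v z)"
proof -
  have "((\<lambda>x. h (U *v x)) has_derivative (\<lambda>v. grad h (U *v z) \<bullet> (U *v v))) (at z)"
    using diff_chain_at[OF mv_has_derivative grad_deriv[OF d]] by (simp add: o_def)
  moreover have "(\<lambda>v. grad h (U *v z) \<bullet> (U *v v)) = (\<lambda>v. (transpose U *v grad h (U *v z)) \<bullet> v)"
    by (simp add: dot_lmul_matrix[symmetric] transpose_matrix_vector)
  ultimately have D: "((\<lambda>x. h (U *v x)) has_derivative (\<lambda>v. (transpose U *v grad h (U *v z)) \<bullet> v)) (at z)"
    by simp
  then show "(\<lambda>x. h (U *v x)) differentiable (at z)" by (rule differentiableI)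
  show "grad (\<lambda>x. h (U *v x)) z = transpose U *v grad h (U *v z)" by (rule grad_unique[OF D])
qed

lemma diff_iff:
  fixes h :: "real^'n \<Rightarrow> real" and U :: "real^'n^'n"
  assumes U: "orthogonal_matrix U"
  shows "(\<lambda>x. h (U *v x)) differentiable (at z) \<longleftrightarrow> h differentiable (at (U *v z))"
proof
  assume d: "(\<lambda>x. h (U *v x)) differentiable (at z)"
  have "(\<lambda>w. (\<lambda>x. h (U *v x)) (transpose U *v w)) differentiable (at (U *v z))"
    by (rule chain_grad(1)) (use d orth_inv2[OF U] in simp)
  then show "h differentiable (at (U *v z))" by (simp add: orth_inv1[OF U])
qed (rule chain_grad(1))

lemma opt_iff:
  fixes g :: "real^'n \<Rightarrow> real" and U :: "real^'n^'n"
  assumes U: "orthogonal_matrix U"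
  shows "opt_drift_eq (\<lambda>x. g (U *v x)) z \<longleftrightarrow> opt_drift_eq g (U *v z)"
proof (cases "g differentiable (at (U *v z))")
  case True
  have gr: "grad (\<lambda>x. g (U *v x)) z = transpose U *v grad g (U *v z)" by (rule chain_grad(2)[OF True])
  have "(1 / g (U *v z)) *\<^sub>R (transpose U *v grad g (U *v z)) = z \<longleftrightarrow>
        (1 / g (U *v z)) *\<^sub>R grad g (U *v z) = U *v z"
  proof
    assume "(1 / g (U *v z)) *\<^sub>R (transpose U *v grad g (U *v z)) = z"
    then have "U *v ((1 / g (U *v z)) *\<^sub>R (transpose U *v grad g (U *v z))) = U *v z" by simp
    then show "(1 / g (U *v z)) *\<^sub>R grad g (U *v z) = U *v z"
      by (simp add: matrix_vector_mult_scaleR orth_inv1[OF U])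
  next
    assume "(1 / g (U *v z)) *\<^sub>R grad g (U *v z) = U *v z"
    then have "transpose U *v ((1 / g (U *v z)) *\<^sub>R grad g (U *v z)) = transpose U *v (U *v z)" by simp
    then show "(1 / g (U *v z)) *\<^sub>R (transpose U *v grad g (U *v z)) = z"
      by (simp add: matrix_vector_mult_scaleR orth_inv2[OF U])
  qed
  then show ?thesis unfolding opt_drift_eq_def gr using True diff_iff[OF U] by auto
next
  case False
  then show ?thesis unfolding opt_drift_eq_def using diff_iff[OF U] by auto
qed

lemma mu_star_orth:
  fixes g :: "real^'n \<Rightarrow> real" and U :: "real^'n^'n"
  assumes U: "orthogonal_matrix U" and u1: "\<exists>!z. opt_drift_eq g z"
  shows "mu_star (\<lambda>x. g (U *v x)) = transpose U *v mu_star g"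
proof -
  have m1: "opt_drift_eq g (mu_star g)" unfolding mu_star_def using theI'[OF u1] .
  have u2: "\<exists>!z. opt_drift_eq (\<lambda>x. g (U *v x)) z"
  proof
    show "opt_drift_eq (\<lambda>x. g (U *v x)) (transpose U *v mu_star g)"
      using m1 by (simp add: opt_iff[OF U] orth_inv1[OF U])
  next
    fix y assume "opt_drift_eq (\<lambda>x. g (U *v x)) y"
    then have "opt_drift_eq g (U *v y)" by (simp add: opt_iff[OF U])
    then have "U *v y = mu_star g" using m1 u1 by blast
    then show "y = transpose U *v mu_star g" using orth_inv2[OF U] by metis
  qed
  show ?thesis unfolding mu_star_def
    by (rule the1_equality[OF u2]) (simp add: opt_iff[OF U] orth_inv1[OF U] theI'[OF u1])
qed

lemma gI_orth:
  fixes g :: "real^'n \<Rightarrow> real" and U :: "real^'n^'n"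
  assumes U: "orthogonal_matrix U" and u1: "\<exists>!z. opt_drift_eq g z"
  shows "gI (\<lambda>x. g (U *v x)) z = gI g (U *v z)"
proof -
  define m where "m = mu_star g"
  have ms: "mu_star (\<lambda>x. g (U *v x)) = transpose U *v m" unfolding m_def by (rule mu_star_orth[OF U u1])
  have 1: "U *v (z + transpose U *v m) = U *v z + m" by (simp add: matrix_vector_right_distrib orth_inv1[OF U])
  have 2: "(transpose U *v m) \<bullet> z = m \<bullet> (U *v z)" by (simp add: dot_lmul_matrix[symmetric] transpose_matrix_vector)
  have 3: "(transpose U *v m) \<bullet> (transpose U *v m) = m \<bullet> m"
    using orth_norm[of "transpose U" m] U by (simp add: orthogonal_matrix_transpose flip: power2_norm_eq_inner)
  show ?thesis unfolding gI_def ms m_def[symmetric] 1 2 3 ..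
qed

lemma meas_gauss: "f \<in> borel_measurable borel \<Longrightarrow> f \<in> borel_measurable (std_gauss :: (real^'n::finite) measure)"
  unfolding std_gauss_def by (subst measurable_cong_sets[OF sets_density refl]) simp

lemma AE_gauss:
  assumes "AE z in lborel. P z"
  shows "AE z in (std_gauss :: (real^'n::finite) measure). P z"
proof -
  have m: "(\<lambda>z::real^'n. ennreal ((2 * pi) powr (- real CARD('n) / 2) * exp (- (norm z)\<^sup>2 / 2))) \<in> borel_measurable lborel"
    by measurable
  show ?thesis unfolding std_gauss_def AE_density[OF m] using assms by (rule AE_mp) simp
qed

lemma grad_info_orth:
  fixes h :: "real^'n::{finite,wellorder} \<Rightarrow> real" and U :: "real^'n::{finite,wellorder}^'n::{finite,wellorder}"
  assumes U: "orthogonal_matrix U" and ae: "AE z in lborel. h differentiable (at z)"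
    and fin: "integrable std_gauss (\<lambda>z. (norm (grad h z))\<^sup>2)"
  shows "grad_info (\<lambda>x. h (U *v x)) = transpose U ** grad_info h ** U"
proof -
  have "AE w in distr lborel borel (\<lambda>z. U *v z). h differentiable (at w)"
    using ae by (simp only: lborel_orth[OF U])
  then have aeU: "AE z in lborel. h differentiable (at (U *v z))"
    by (rule AE_distrD[rotated]) (simp add: mv_meas)
  have aeG: "AE z in std_gauss. grad (\<lambda>x. h (U *v x)) z = transpose U *v grad h (U *v z)"
    by (rule AE_gauss) (use aeU in \<open>auto elim!: AE_mp intro: chain_grad(2)\<close>)
  have gm: "(\<lambda>z. grad h z $ k) \<in> borel_measurable borel" for k by (rule grad_borel)
  have gmU: "(\<lambda>z. grad h (U *v z) $ k) \<in> borel_measurable borel" for k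
    by (rule measurable_compose[OF mv_meas gm])
  have int: "integrable std_gauss (\<lambda>w. grad h w $ k * grad h w $ l)" for k l
  proof (rule Bochner_Integration.integrable_bound[OF fin])
    show "(\<lambda>w. grad h w $ k * grad h w $ l) \<in> borel_measurable std_gauss"
      by (intro meas_gauss borel_measurable_times gm)
    show "AE w in std_gauss. norm (grad h w $ k * grad h w $ l) \<le> norm ((norm (grad h w))\<^sup>2)"
    proof (intro AE_I2)
      fix w
      have "\<bar>grad h w $ k\<bar> * \<bar>grad h w $ l\<bar> \<le> norm (grad h w) * norm (grad h w)"
        by (intro mult_mono component_le_norm_cart) auto
      then show "norm (grad h w $ k * grad h w $ l) \<le> norm ((norm (grad h w))\<^sup>2)"
        by (simp add: abs_mult power2_eq_square)
    qed
  qed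
  have entry: "grad_info (\<lambda>x. h (U *v x)) $ i $ j = (transpose U ** grad_info h ** U) $ i $ j" for i j
  proof -
    define P where "P x = (transpose U *v x) $ i * (transpose U *v x) $ j" for x
    have Pexp: "P x = (\<Sum>k\<in>UNIV. \<Sum>l\<in>UNIV. (U$k$i * U$l$j) * (x$k * x$l))" for x
      unfolding P_def matrix_vector_mult_def transpose_def
      by (simp add: sum_product algebra_simps)
    have PG: "(\<lambda>w. P (grad h w)) \<in> borel_measurable borel"
      unfolding Pexp by (intro borel_measurable_sum borel_measurable_times borel_measurable_const gm)
    have "grad_info (\<lambda>x. h (U *v x)) $ i $ j
        = (\<integral>z. grad (\<lambda>x. h (U *v x)) z $ i * grad (\<lambda>x. h (U *v x)) z $ j \<partial>std_gauss)"
      unfolding grad_info_def by simp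
    also have "\<dots> = (\<integral>z. P (grad h (U *v z)) \<partial>std_gauss)"
    proof (rule integral_cong_AE)
      show "(\<lambda>z. grad (\<lambda>x. h (U *v x)) z $ i * grad (\<lambda>x. h (U *v x)) z $ j) \<in> borel_measurable std_gauss"
        by (intro meas_gauss borel_measurable_times grad_borel)
      show "(\<lambda>z. P (grad h (U *v z))) \<in> borel_measurable std_gauss"
        by (intro meas_gauss measurable_compose[OF mv_meas PG])
      show "AE z in std_gauss. grad (\<lambda>x. h (U *v x)) z $ i * grad (\<lambda>x. h (U *v x)) z $ j = P (grad h (U *v z))"
        using aeG by (rule AE_mp) (simp add: P_def)
    qed
    also have "\<dots> = (\<integral>w. P (grad h w) \<partial>distr std_gauss borel (\<lambda>z. U *v z))"
      by (rule integral_distr[symmetric]) (simp_all add: PG std_gauss_def mv_meas)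
    also have "\<dots> = (\<integral>w. P (grad h w) \<partial>std_gauss)" by (simp only: gauss_orth[OF U])
    also have "\<dots> = (\<Sum>k\<in>UNIV. \<Sum>l\<in>UNIV. (U$k$i * U$l$j) * (\<integral>w. grad h w $ k * grad h w $ l \<partial>std_gauss))"
      unfolding Pexp
      by (simp add: Bochner_Integration.integral_sum int integral_mult_right_zero)
    also have "\<dots> = (transpose U ** grad_info h ** U) $ i $ j"
      unfolding grad_info_def matrix_matrix_mult_def transpose_def
      apply (simp add: sum_distrib_left sum_distrib_right algebra_simps)
      apply (subst sum.swap)
      apply (simp add: mult_ac)
      done
    finally show ?thesis .
  qed
  show ?thesis by (simp add: vec_eq_iff entry)
qed

lemma gI_ae_diff:
  fixes g :: "real^'n::finite \<Rightarrow> real"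
  assumes ae: "AE z in lborel. g differentiable (at z)"
  shows "AE z in lborel. (gI g) differentiable (at z)"
proof -
  define m where "m = mu_star g"
  have "AE w in distr lborel borel ((+) m). g differentiable (at w)"
    using ae by (simp only: lborel_distr_plus)
  then have ae2: "AE z in lborel. g differentiable (at (m + z))"
    by (rule AE_distrD[rotated]) simp
  show ?thesis
  proof (rule AE_mp[OF ae2], intro AE_I2 impI)
    fix z assume d: "g differentiable (at (m + z))"
    have d1: "(\<lambda>x. g (x + m)) differentiable (at z)"
    proof -
      have "(\<lambda>x. x + m) differentiable (at z)" by (intro derivative_intros)
      moreover have "g differentiable (at ((\<lambda>x. x + m) z))" using d by (simp add: add.commute)
      ultimately have "(g \<circ> (\<lambda>x. x + m)) differentiable (at z)" by (rule differentiable_chain_at)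
      then show ?thesis by (simp add: o_def)
    qed
    have d2: "(\<lambda>x. exp (- (m \<bullet> x) - (1/2) * (m \<bullet> m))) differentiable (at z)"
    proof -
      have "((\<lambda>x. - (m \<bullet> x) - 1 / 2 * (m \<bullet> m)) has_derivative (\<lambda>v. - (m \<bullet> v))) (at z)"
        by (intro derivative_eq_intros) auto
      then have a: "(\<lambda>x. - (m \<bullet> x) - 1 / 2 * (m \<bullet> m)) differentiable (at z)" by (rule differentiableI)
      have b: "exp differentiable (at y)" for y :: real
        using DERIV_exp[of y] unfolding has_field_derivative_def by (rule differentiableI)
      show ?thesis using differentiable_chain_at[OF a b] by (simp add: o_def)
    qed
    show "gI g differentiable (at z)"
      unfolding gI_def m_def[symmetric] using differentiable_mult[OF d1 d2] by simp
  qed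
qed

theorem theorem3p5:
  fixes g1 :: "real^'n::{finite,wellorder} \<Rightarrow> real"
    and U :: "real^'n::{finite,wellorder}^'n::{finite,wellorder}"
  assumes nonneg: "\<forall>z. g1 z \<ge> 0"
    and ae_diff: "AE z in lborel. g1 differentiable (at z)"
    and orthU: "orthogonal_matrix U"
    and uniq1: "\<exists>!z. opt_drift_eq g1 z"
    and uniq2: "\<exists>!z. opt_drift_eq (\<lambda>z. g1 (U *v z)) z"
    and fin1: "integrable std_gauss (\<lambda>z. (norm (grad (gI g1) z))\<^sup>2)"
    and fin2: "integrable std_gauss (\<lambda>z. (norm (grad (gI (\<lambda>z. g1 (U *v z))) z))\<^sup>2)"
  shows "\<exists>V. orthogonal_matrix V
           \<and> (\<forall>z. gI (\<lambda>z. g1 (U *v z)) z = gI g1 (V *v z))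
           \<and> (\<forall>Q1 Lam. eig_decomp (grad_info (gI g1)) Q1 Lam \<longrightarrow>
                 eig_decomp (grad_info (gI (\<lambda>z. g1 (U *v z)))) (transpose V ** Q1) Lam
               \<and> (\<forall>r. (\<lambda>z. V *v z) ` active_subspace (transpose V ** Q1) r = active_subspace Q1 r)
               \<and> (\<forall>z. gIA g1 Q1 z = gIA (\<lambda>z. g1 (U *v z)) (transpose V ** Q1) z))"
  proof -
  let ?g2 = "\<lambda>z. g1 (U *v z)"
  have h2eq: "gI ?g2 = (\<lambda>z. gI g1 (U *v z))"
    by (rule ext) (rule gI_orth[OF orthU uniq1])
  have C2: "grad_info (gI ?g2) = transpose U ** grad_info (gI g1) ** U"
    unfolding h2eq by (rule grad_info_orth[OF orthU gI_ae_diff[OF ae_diff] fin1])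
  have Ut: "orthogonal_matrix (transpose U)" using orthU by (simp add: orthogonal_matrix_transpose)
  have colU: "U *v column i (transpose U ** Q) = column i Q" for i and Q
    by (metis matrix_vector_mult_basis matrix_vector_mul_assoc orth_inv1[OF orthU])
  show ?thesis
  proof (intro exI[of _ U] conjI allI impI)
    show "orthogonal_matrix U" by (rule orthU)
    fix z show "gI ?g2 z = gI g1 (U *v z)" by (simp add: h2eq)
  next
    fix Q1 Lam assume E: "eig_decomp (grad_info (gI g1)) Q1 Lam"
    then have oQ: "orthogonal_matrix Q1" and C1: "grad_info (gI g1) = Q1 ** Lam ** transpose Q1"
      unfolding eig_decomp_def by auto
    have "grad_info (gI ?g2) = (transpose U ** Q1) ** Lam ** transpose (transpose U ** Q1)"
      unfolding C2 C1 by (simp add: matrix_transpose_mul matrix_mul_assoc)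
    then show "eig_decomp (grad_info (gI ?g2)) (transpose U ** Q1) Lam"
      using E Ut oQ unfolding eig_decomp_def by (simp add: orthogonal_matrix_mul)
  next
    fix Q1 Lam r assume E: "eig_decomp (grad_info (gI g1)) Q1 Lam"
    have "(\<lambda>z. U *v z) ` {column i (transpose U ** Q1) | i. card {k. k < i} < r} = {column i Q1 | i. card {k. k < i} < r}"
      using colU by (auto simp: image_iff) (metis)
    then show "(\<lambda>z. U *v z) ` active_subspace (transpose U ** Q1) r = active_subspace Q1 r"
      unfolding active_subspace_def by (simp add: span_linear_image[symmetric] matrix_vector_mul_linear)
  next
    fix Q1 Lam z
    show "gIA g1 Q1 z = gIA ?g2 (transpose U ** Q1) z"
      unfolding gIA_def h2eq by (simp add: matrix_vector_mul_assoc[symmetric] orth_inv1[OF orthU])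
  qed
qed

end
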